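(* (Propagation of the weak energy condition.) Assume (A1)–(A5). Let $(\varrho,n,\Pi,u)$ be a smooth admissible solution of the Müller–Israel–Stewart equations on $[0,T_0)\times\mathbb{R}^3$ whose initial data satisfy $\mathring\varrho+p(\mathring\varrho,\mathring n)+\mathring\Pi\ge0$ for all $x\in\mathbb{R}^3$. Then $\varrho+p(\varrho,n)+\Pi\ge0$ for all $(t,x)\in[0,T_0)\times\mathbb{R}^3$.
   Context: Minkowski space $\mathbb{R}^{1+3}$, metric $g=\mathrm{diag}(-1,1,1,1)$, coordinates $(t,x)$, summation convention. Müller–Israel–Stewart equations for $\varrho,n,\Pi$ and future-directed unit timelike $u$: $u^\alpha\partial_\alpha\varrho+(\varrho+p+\Pi)\partial_\alpha u^\alpha=0$, $(\varrho+p+\Pi)u^\beta\partial_\beta u_\alpha+(g_\alpha^\beta+u_\alpha u^\beta)\partial_\beta(p+\Pi)=0$, $u^\alpha\partial_\alpha n+n\partial_\alpha u^\alpha=0$, $\tau_0u^\alpha\partial_\alpha\Pi+\Pi+\lambda\Pi^2+\zeta\partial_\alpha u^\alpha=0$, with given $p,\zeta,\tau_0,\lambda$ functions of $(\varrho,n)$; initial data $(\mathring\varrho,\mathring n,\mathring\Pi,\mathring{\mathbf u})$. $c_s^2=\frac{\zeta}{\tau_0(\varrho+p+\Pi)}+\partial_\varrho p+\frac{n\partial_np}{\varrho+p+\Pi}$; $\mathcal P=\{\varrho>0,n>0,0<c_s^2<1\}$; admissible means values $(\varrho,n,\Pi)\in\mathcal P$. Assumptions: (A1) $p,\zeta,\tau_0$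 smooth on $\mathbb{R}^+\times\mathbb{R}^+$ with smooth extensions to $\mathbb{R}\times\mathbb{R}^+$; constants $p_0,p_1\ge0$ with $-\varrho\le p\le\varrho+p_1$, $-p_0<p$ at all $(\varrho,n)$ with $(\varrho,n,\Pi)\in\mathcal P$ for some $\Pi$. (A2) $p$ globally Lipschitz on $\mathbb{R}\times\mathbb{R}^+$, $\partial_\varrho p\ne0$, $\partial_np\ne0$ at physical states. (A3) $\zeta,\tau_0$ smooth on $\mathbb{R}\times\mathbb{R}^+$, $\zeta\ge0$, $\tau_0>c'>0$, $\partial_\varrho(\zeta/\tau_0)$, $\partial_n(\zeta/\tau_0)$ bounded, $\partial_\varrho(\zeta/\tau_0)\ge0$. (A4) $\int_0^\infty\frac1n\sup_\varrho|\zeta/\tau_0|\,dn<\infty$. (A5) $\lambda\equiv0$, or $\lambda$ smooth positive with $p+\varrho<1/\lambda$ at physical states. *)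

theory Defs
  imports "HOL-Analysis.Analysis"
begin

text \<open>Spacetime points are pairs (t, x) with t real and x in R^3.
  Four-vectors are elements of the same type real \<times> real^3 (time component first).\<close>

type_synonym spt = "real \<times> (real^3)"

text \<open>C-infinity smoothness on a set S (derivatives taken within S, so that
  at the boundary t = 0 one-sided derivatives are used): f is continuous and
  differentiable on S and all its first partial derivatives are again smooth.\<close>

coinductive Cinf :: "'a::euclidean_space set \<Rightarrow> ('a \<Rightarrow> real) \<Rightarrow> bool" for S where
  "continuous_on S f \<Longrightarrow> f differentiable_on S \<Longrightarrow>
   (\<forall>b\<in>Basis. Cinf S (\<lambda>y. frechet_derivative f (at y within S) b)) \<Longrightarrow> Cinf S f"

definition mink :: "spt \<Rightarrow> spt \<Rightarrow> real" where
  "mink v w = - fst v * fst w + snd v \<bullet> snd w"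

definition dd :: "spt set \<Rightarrow> (spt \<Rightarrow> 'b::real_normed_vector) \<Rightarrow> spt \<Rightarrow> spt \<Rightarrow> 'b" where
  "dd S f q v = frechet_derivative f (at q within S) v"

definition divg :: "spt set \<Rightarrow> (spt \<Rightarrow> spt) \<Rightarrow> spt \<Rightarrow> real" where
  "divg S u q = (\<Sum>b\<in>Basis. dd S u q b \<bullet> b)"

definition d_rho :: "(real \<Rightarrow> real \<Rightarrow> real) \<Rightarrow> real \<Rightarrow> real \<Rightarrow> real" where
  "d_rho f r m = deriv (\<lambda>s. f s m) r"
definition d_n :: "(real \<Rightarrow> real \<Rightarrow> real) \<Rightarrow> real \<Rightarrow> real \<Rightarrow> real" where
  "d_n f r m = deriv (\<lambda>s. f r s) m"

definition cs2 :: "(real \<Rightarrow> real \<Rightarrow> real) \<Rightarrow> (real \<Rightarrow> real \<Rightarrow> real) \<Rightarrow> (real \<Rightarrow> real \<Rightarrow> real)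
    \<Rightarrow> real \<Rightarrow> real \<Rightarrow> real \<Rightarrow> real" where
  "cs2 p zeta tau0 r m Bp =
     zeta r m / (tau0 r m * (r + p r m + Bp)) + d_rho p r m + m * d_n p r m / (r + p r m + Bp)"

definition phys :: "(real \<Rightarrow> real \<Rightarrow> real) \<Rightarrow> (real \<Rightarrow> real \<Rightarrow> real) \<Rightarrow> (real \<Rightarrow> real \<Rightarrow> real)
    \<Rightarrow> real \<Rightarrow> real \<Rightarrow> real \<Rightarrow> bool" where
  "phys p zeta tau0 r m Bp \<longleftrightarrow>
     0 < r \<and> 0 < m \<and> 0 < cs2 p zeta tau0 r m Bp \<and> cs2 p zeta tau0 r m Bp < 1"

definition halfplane :: "(real \<times> real) set" where
  "halfplane = {(r, m). 0 < m}"

definition A1 :: "(real \<Rightarrow> real \<Rightarrow> real) \<Rightarrow> (real \<Rightarrow> real \<Rightarrow> real) \<Rightarrow> (real \<Rightarrow> real \<Rightarrow> real) \<Rightarrow> bool" where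
  "A1 p zeta tau0 \<longleftrightarrow>
     Cinf halfplane (\<lambda>(r, m). p r m) \<and> Cinf halfplane (\<lambda>(r, m). zeta r m) \<and>
     Cinf halfplane (\<lambda>(r, m). tau0 r m) \<and>
     (\<exists>p0 p1. 0 \<le> p0 \<and> 0 \<le> p1 \<and>
        (\<forall>r m Bp. phys p zeta tau0 r m Bp \<longrightarrow>
            - r \<le> p r m \<and> p r m \<le> r + p1 \<and> - p0 < p r m))"

definition A2 :: "(real \<Rightarrow> real \<Rightarrow> real) \<Rightarrow> (real \<Rightarrow> real \<Rightarrow> real) \<Rightarrow> (real \<Rightarrow> real \<Rightarrow> real) \<Rightarrow> bool" where
  "A2 p zeta tau0 \<longleftrightarrow>
     (\<exists>L. \<forall>r1 m1 r2 m2. 0 < m1 \<longrightarrow> 0 < m2 \<longrightarrow>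
        \<bar>p r1 m1 - p r2 m2\<bar> \<le> L * dist (r1, m1) (r2, m2)) \<and>
     (\<forall>r m Bp. phys p zeta tau0 r m Bp \<longrightarrow> d_rho p r m \<noteq> 0 \<and> d_n p r m \<noteq> 0)"

definition A3 :: "(real \<Rightarrow> real \<Rightarrow> real) \<Rightarrow> (real \<Rightarrow> real \<Rightarrow> real) \<Rightarrow> bool" where
  "A3 zeta tau0 \<longleftrightarrow>
     Cinf halfplane (\<lambda>(r, m). zeta r m) \<and> Cinf halfplane (\<lambda>(r, m). tau0 r m) \<and>
     (\<forall>r m. 0 < m \<longrightarrow> 0 \<le> zeta r m) \<and>
     (\<exists>c'. 0 < c' \<and> (\<forall>r m. 0 < m \<longrightarrow> c' < tau0 r m)) \<and>
     (\<exists>B. \<forall>r m. 0 < m \<longrightarrow>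
        \<bar>d_rho (\<lambda>s k. zeta s k / tau0 s k) r m\<bar> \<le> B \<and>
        \<bar>d_n (\<lambda>s k. zeta s k / tau0 s k) r m\<bar> \<le> B) \<and>
     (\<forall>r m. 0 < m \<longrightarrow> 0 \<le> d_rho (\<lambda>s k. zeta s k / tau0 s k) r m)"

definition A4 :: "(real \<Rightarrow> real \<Rightarrow> real) \<Rightarrow> (real \<Rightarrow> real \<Rightarrow> real) \<Rightarrow> bool" where
  "A4 zeta tau0 \<longleftrightarrow>
     (\<integral>\<^sup>+ m\<in>{0<..}. ennreal (1 / m) * (SUP r. ennreal \<bar>zeta r m / tau0 r m\<bar>) \<partial>lborel) < \<infinity>"

definition A5 :: "(real \<Rightarrow> real \<Rightarrow> real) \<Rightarrow> (real \<Rightarrow> real \<Rightarrow> real) \<Rightarrow> (real \<Rightarrow> real \<Rightarrow> real)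
    \<Rightarrow> (real \<Rightarrow> real \<Rightarrow> real) \<Rightarrow> bool" where
  "A5 p zeta tau0 lam \<longleftrightarrow>
     (\<forall>r m. 0 < m \<longrightarrow> lam r m = 0) \<or>
     (Cinf halfplane (\<lambda>(r, m). lam r m) \<and> (\<forall>r m. 0 < m \<longrightarrow> 0 < lam r m) \<and>
      (\<forall>r m Bp. phys p zeta tau0 r m Bp \<longrightarrow> p r m + r < 1 / lam r m))"

definition slab :: "real \<Rightarrow> spt set" where
  "slab T0 = {0..<T0} \<times> UNIV"

definition MIS_smooth_admissible_solution ::
  "(real \<Rightarrow> real \<Rightarrow> real) \<Rightarrow> (real \<Rightarrow> real \<Rightarrow> real) \<Rightarrow> (real \<Rightarrow> real \<Rightarrow> real) \<Rightarrow> (real \<Rightarrow> real \<Rightarrow> real)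
   \<Rightarrow> real \<Rightarrow> (spt \<Rightarrow> real) \<Rightarrow> (spt \<Rightarrow> real) \<Rightarrow> (spt \<Rightarrow> real) \<Rightarrow> (spt \<Rightarrow> spt) \<Rightarrow> bool" where
  "MIS_smooth_admissible_solution p zeta tau0 lam T0 rho nn Bp u \<longleftrightarrow>
    (let S = slab T0 in
     Cinf S rho \<and> Cinf S nn \<and> Cinf S Bp \<and> (\<forall>b\<in>Basis. Cinf S (\<lambda>q. u q \<bullet> b)) \<and>
     (\<forall>q\<in>S.
        mink (u q) (u q) = -1 \<and> 0 < fst (u q) \<and>
        phys p zeta tau0 (rho q) (nn q) (Bp q) \<and>
        dd S rho q (u q) + (rho q + p (rho q) (nn q) + Bp q) * divg S u q = 0 \<and>
        (\<forall>b\<in>Basis.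
           (rho q + p (rho q) (nn q) + Bp q) * dd S (\<lambda>y. mink (u y) b) q (u q)
           + dd S (\<lambda>y. p (rho y) (nn y) + Bp y) q b
           + mink (u q) b * dd S (\<lambda>y. p (rho y) (nn y) + Bp y) q (u q) = 0) \<and>
        dd S nn q (u q) + nn q * divg S u q = 0 \<and>
        tau0 (rho q) (nn q) * dd S Bp q (u q) + Bp q + lam (rho q) (nn q) * (Bp q)\<^sup>2
           + zeta (rho q) (nn q) * divg S u q = 0))"

end

theory Submission
  imports Defs
begin


lemma Cinf_D:
  assumes "Cinf S f"
  shows "continuous_on S f" "f differentiable_on S"
    "\<And>b. b\<in>Basis \<Longrightarrow> Cinf S (\<lambda>y. frechet_derivative f (at y within S) b)"
  using assms by (auto elim: Cinf.cases)

lemma lin_expand: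
  fixes f :: "'a::euclidean_space \<Rightarrow> real"
  assumes "linear f"
  shows "f x = (\<Sum>b\<in>Basis. (x \<bullet> b) * f b)"
proof -
  have "f x = f (\<Sum>b\<in>Basis. (x \<bullet> b) *\<^sub>R b)" by (simp add: euclidean_representation)
  also have "\<dots> = (\<Sum>b\<in>Basis. (x \<bullet> b) * f b)"
    using assms by (simp add: linear_sum linear_scale)
  finally show ?thesis .
qed

lemma DL:
  fixes h :: "'a::real_normed_vector \<Rightarrow> real"
  assumes der: "(h has_derivative F') (at q within S)"
    and del: "0 < \<delta>" and seg: "\<And>s. 0 \<le> s \<Longrightarrow> s \<le> \<delta> \<Longrightarrow> q - s *\<^sub>R v \<in> S"
    and pos: "\<And>s. 0 < s \<Longrightarrow> s \<le> \<delta> \<Longrightarrow> h (q - s *\<^sub>R v) > h q"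
  shows "F' v \<le> 0"
proof (rule ccontr)
  assume "\<not> F' v \<le> 0"
  hence Fv: "F' v > 0" by simp
  have lin: "linear F'" using der has_derivative_linear by blast
  have g: "((\<lambda>s::real. q - s *\<^sub>R v) has_derivative (\<lambda>s. - (s *\<^sub>R v))) (at 0 within {0..\<delta>})"
    by (auto intro!: derivative_eq_intros)
  have img: "(\<lambda>s::real. q - s *\<^sub>R v) ` {0..\<delta>} \<subseteq> S" using seg by auto
  have der2: "(h has_derivative F') (at ((\<lambda>s::real. q - s *\<^sub>R v) 0) within (\<lambda>s::real. q - s *\<^sub>R v) ` {0..\<delta>})"
    using has_derivative_subset[OF der img] by simp
  have "((\<lambda>s. h (q - s *\<^sub>R v)) has_derivative (\<lambda>s. F' (- (s *\<^sub>R v)))) (at 0 within {0..\<delta>})"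
    using diff_chain_within[OF g der2] by (simp add: o_def)
  moreover have "(\<lambda>s. F' (- (s *\<^sub>R v))) = (\<lambda>s. s * (- F' v))"
    using lin by (auto simp: linear_neg linear_scale)
  ultimately have "((\<lambda>s. h (q - s *\<^sub>R v)) has_derivative (\<lambda>s. s * (- F' v))) (at 0 within {0..\<delta>})"
    by metis
  moreover have "(\<lambda>s. s * (- F' v)) = (*) (- F' v)" by (auto simp: fun_eq_iff)
  ultimately have "((\<lambda>s. h (q - s *\<^sub>R v)) has_real_derivative (- F' v)) (at 0 within {0..\<delta>})"
    unfolding has_field_derivative_def by metis
  from has_real_derivative_neg_dec_right[OF this] Fv
  obtain d where d: "d > 0" "\<And>s. s > 0 \<Longrightarrow> 0 + s \<in> {0..\<delta>} \<Longrightarrow> s < d \<Longrightarrow> h (q - (0 + s) *\<^sub>R v) < h (q - 0 *\<^sub>R v)"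
    by force
  define s where "s = min (d/2) \<delta>"
  have "s > 0" "s \<le> \<delta>" "s < d" using d del by (auto simp: s_def)
  with d(2)[of s] pos[of s] show False by auto
qed



lemma MP:
  fixes h :: "'a::real_normed_vector \<times> 'b::real_normed_vector \<Rightarrow> real" and v :: "'a \<times> 'b \<Rightarrow> 'a \<times> 'b"
    and tt :: "'a \<times> 'b \<Rightarrow> real"
  assumes K: "compact K" and cont: "continuous_on K h" and ctt: "continuous_on K tt"
    and q0: "q0 \<in> K" "h q0 \<le> 0"
    and init: "\<And>q. q \<in> K \<Longrightarrow> tt q \<le> 0 \<Longrightarrow> h q > 0"
    and inward: "\<And>q. q \<in> K \<Longrightarrow> tt q > 0 \<Longrightarrow> \<exists>\<delta>>0. \<forall>s. 0 \<le> s \<and> s \<le> \<delta> \<longrightarrow>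
        q - s *\<^sub>R v q \<in> K \<and> (0 < s \<longrightarrow> tt (q - s *\<^sub>R v q) < tt q)"
  shows "\<exists>q\<in>K. tt q > 0 \<and> h q = 0 \<and> (\<exists>\<delta>>0. (\<forall>s. 0 \<le> s \<and> s \<le> \<delta> \<longrightarrow> q - s *\<^sub>R v q \<in> K)
      \<and> (\<forall>s. 0 < s \<and> s \<le> \<delta> \<longrightarrow> h (q - s *\<^sub>R v q) > h q))"
proof -
  define Z where "Z = K \<inter> h -` {..0}"
  have "closed Z" unfolding Z_def
    by (rule continuous_closed_preimage[OF cont compact_imp_closed[OF K]]) auto
  hence cZ: "compact Z" using compact_Int_closed[OF K, of Z] by (auto simp: Z_def)
  have "Z \<noteq> {}" using q0 by (auto simp: Z_def)
  have "continuous_on Z tt" using ctt by (rule continuous_on_subset) (auto simp: Z_def)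
  then obtain q where qZ: "q \<in> Z" and qmin: "\<And>y. y \<in> Z \<Longrightarrow> tt q \<le> tt y"
    using continuous_attains_inf[OF cZ \<open>Z \<noteq> {}\<close>] by blast
  have qK: "q \<in> K" and hq: "h q \<le> 0" using qZ by (auto simp: Z_def)
  have tq: "tt q > 0"
  proof (rule ccontr)
    assume "\<not> tt q > 0" hence "h q > 0" using init[OF qK] by simp
    with hq show False by simp
  qed
  from inward[OF qK tq] obtain \<delta> where d1: "\<delta> > 0" and H: "\<forall>s. 0 \<le> s \<and> s \<le> \<delta> \<longrightarrow>
        q - s *\<^sub>R v q \<in> K \<and> (0 < s \<longrightarrow> tt (q - s *\<^sub>R v q) < tt q)"
    by (elim exE conjE) 
  have d: "\<delta> > 0" "\<And>s. 0 \<le> s \<Longrightarrow> s \<le> \<delta> \<Longrightarrow> q - s *\<^sub>R v q \<in> K"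
     "\<And>s. 0 < s \<Longrightarrow> s \<le> \<delta> \<Longrightarrow> tt (q - s *\<^sub>R v q) < tt q"
    using d1 H by auto
  have hpos: "h (q - s *\<^sub>R v q) > 0" if "0 < s" "s \<le> \<delta>" for s
  proof (rule ccontr)
    assume "\<not> ?thesis"
    hence "q - s *\<^sub>R v q \<in> Z" using d(2)[of s] that by (auto simp: Z_def)
    from qmin[OF this] d(3)[OF that] show False by simp
  qed
  have h0: "h q = 0"
  proof (rule ccontr)
    assume "h q \<noteq> 0"
    hence "h q < 0" using hq by simp
    have "\<forall>e>0. \<exists>d>0. \<forall>x'\<in>K. dist x' q < d \<longrightarrow> dist (h x') (h q) < e"
      using cont qK unfolding continuous_on_iff by blast
    then obtain e where e: "e > 0" "\<And>x'. x' \<in> K \<Longrightarrow> dist x' q < e \<Longrightarrow> dist (h x') (h q) < - h q"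
      using \<open>h q < 0\<close> by (meson neg_0_less_iff_less)
    define s where "s = min \<delta> (e / (2 * (norm (v q) + 1)))"
    have "0 < 2 * (norm (v q) + 1)" by (simp add: add_nonneg_pos)
    hence "0 < e / (2 * (norm (v q) + 1))" using e(1) by (rule divide_pos_pos[rotated])
    hence s: "0 < s" "s \<le> \<delta>" using d(1) by (auto simp: s_def)
    have "dist (q - s *\<^sub>R v q) q = s * norm (v q)" using s by (simp add: dist_norm)
    also have "\<dots> \<le> (e / (2 * (norm (v q) + 1))) * norm (v q)"
      by (rule mult_right_mono) (auto simp: s_def)
    also have "\<dots> < e"
    proof -
      have pp: "norm (v q) + 1 > 0" by (simp add: add_nonneg_pos)
      have n1: "norm (v q) / (norm (v q) + 1) \<le> 1" using pp by (simp add: divide_le_eq)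
      have "(e / (2 * (norm (v q) + 1))) * norm (v q) = (e/2) * (norm (v q) / (norm (v q) + 1))"
        by simp
      also have "\<dots> \<le> e / 2" by (rule mult_left_le[OF n1]) (use e in simp)
      finally have "(e / (2 * (norm (v q) + 1))) * norm (v q) \<le> e / 2" .
      thus ?thesis using e by linarith
    qed
    finally have "dist (h (q - s *\<^sub>R v q)) (h q) < - h q" using e(2) d(2) s by auto
    with hpos[OF s] show False by (simp add: dist_real_def)
  qed
  have "(\<forall>s. 0 \<le> s \<and> s \<le> \<delta> \<longrightarrow> q - s *\<^sub>R v q \<in> K)
      \<and> (\<forall>s. 0 < s \<and> s \<le> \<delta> \<longrightarrow> h (q - s *\<^sub>R v q) > h q)" using d(2) hpos h0 by simp
  then show ?thesis using qK tq h0 d(1) by blast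
qed



lemma ALG:
  fixes Rv Nv Bv P1 P2 dv w m B lam zeta tau c b a Dm Lm cp M uz :: real
  assumes eR: "Rv + w*dv = 0" and eN: "Nv + m*dv = 0"
    and eB: "tau*Bv + B + lam*B^2 + zeta*dv = 0"
    and eC: "c = zeta/(tau*w) + P1 + m*P2/w" and c0: "0<c" and c1: "c<1"
    and wb: "w = -b" and b0: "b>0" and Ba: "B = w - a" and a0: "a \<ge> 0" and l0: "0 \<le> lam"
    and la: "lam*a < 1" and lL: "lam \<le> Lm" and tc: "tau > cp" and cp: "cp>0"
    and dD: "\<bar>dv\<bar> \<le> Dm" and Mdef: "M = 2*Dm + 1/cp + 1" and Lb: "Lm*b < cp" and uz: "uz \<ge> 1"
  shows "Rv + (Rv*P1 + Nv*P2) + Bv + M*b*uz > 0"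
proof -
  have tau0: "tau > 0" using tc cp by linarith
  have wn: "w \<noteq> 0" using wb b0 by simp
  have cw: "c*w = zeta/tau + P1*w + m*P2" using eC wn tau0 by (simp add: field_simps)
  have Bv: "Bv = (- B - lam*B^2 - zeta*dv)/tau" using eB tau0 by (simp add: field_simps)
  have Rv: "Rv = - w*dv" and Nv: "Nv = - m*dv" using eR eN by linarith+
  define X where "X = -B*(1+lam*B)"
  have main: "Rv + (Rv*P1 + Nv*P2) + Bv = -dv*(c*w) - dv*w + X/tau"
    unfolding Rv Nv Bv cw X_def using tau0 by (simp add: field_simps power2_eq_square)
  have X1: "X = a*(1-lam*a) + b*(1-2*lam*a) - lam*b^2"
    unfolding X_def Ba wb by (simp add: algebra_simps power2_eq_square)
  have "a*(1-lam*a) \<ge> 0" using a0 la by simp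
  moreover have "b*(1-2*lam*a) \<ge> -b"
  proof -
    have "1-2*lam*a \<ge> -1" using la by linarith
    hence "b*(1-2*lam*a) \<ge> b*(-1)" using b0 by (intro mult_left_mono) auto
    thus ?thesis by simp
  qed
  ultimately have X2: "X \<ge> -(b + lam*b^2)" unfolding X1 by linarith
  have lb2: "lam*b^2 \<le> Lm*b^2" using lL by (intro mult_right_mono) auto
  have X3: "X/tau \<ge> -(b + Lm*b^2)/cp"
  proof (cases "X \<ge> 0")
    case True
    hence "X/tau \<ge> 0" using tau0 by simp
    moreover have "-(b + Lm*b^2)/cp \<le> 0"
    proof -
      have "Lm \<ge> 0" using l0 lL by linarith
      hence "b + Lm*b^2 \<ge> 0" using b0 by simp
      hence "-(b + Lm*b^2) \<le> 0" by linarith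
      thus ?thesis using cp by (simp add: divide_nonpos_pos)
    qed
    ultimately show ?thesis by linarith
  next
    case False
    hence "X/tau \<ge> X/cp" using tc cp by (intro divide_left_mono_neg) auto
    moreover have "X/cp \<ge> -(b + Lm*b^2)/cp" using X2 lb2 cp by (intro divide_right_mono) auto
    ultimately show ?thesis by linarith
  qed
  have T1: "\<bar>dv*(c*w) + dv*w\<bar> \<le> 2*Dm*b"
  proof -
    have "dv*(c*w) + dv*w = -(dv * ((1+c) * b))" using wb by (simp add: algebra_simps)
    hence "\<bar>dv*(c*w) + dv*w\<bar> = \<bar>dv\<bar> * \<bar>(1+c) * b\<bar>" by (simp add: abs_mult)
    also have "\<bar>(1+c) * b\<bar> = (1+c)*b" using b0 c0 by simp
    finally have "\<bar>dv*(c*w) + dv*w\<bar> = \<bar>dv\<bar> * (1+c) * b" by simp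
    also have "\<dots> \<le> Dm * 2 * b" using dD c0 c1 b0
      by (intro mult_right_mono mult_mono) auto
    finally show ?thesis by simp
  qed
  have Mb: "M*b*uz \<ge> M*b"
  proof -
    have "1/cp > 0" using cp by simp
    moreover have "Dm \<ge> 0" using dD abs_ge_zero order_trans by blast
    ultimately have "M > 0" using Mdef by linarith
    thus ?thesis using uz b0 by simp
  qed
  have E: "-(b + Lm*b^2)/cp = -b/cp - (Lm*b/cp)*b" by (simp add: diff_divide_distrib add_divide_distrib power2_eq_square)
  have "Lm*b/cp < 1" using Lb cp by simp
  hence "(Lm*b/cp)*b < 1*b" using b0 by (intro mult_strict_right_mono) auto
  hence "(Lm*b/cp)*b < b" by simp
  hence "-2*Dm*b - b/cp - (Lm*b/cp)*b + M*b > 0"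
    unfolding Mdef using b0 by (simp add: algebra_simps)
  thus ?thesis using main X3 E T1 Mb by linarith
qed



lemma partials:
  fixes G' :: "real\<times>real \<Rightarrow> real" and p :: "real \<Rightarrow> real \<Rightarrow> real"
  assumes der: "((\<lambda>(r,m). p r m) has_derivative G') (at (r,m))"
  shows "d_rho p r m = G' (1,0)" "d_n p r m = G' (0,1)" "\<And>a b. G' (a,b) = a * G' (1,0) + b * G' (0,1)"
proof -
  have lin: "linear G'" using der has_derivative_linear by blast
  show lin2: "\<And>a b. G' (a,b) = a * G' (1,0) + b * G' (0,1)"
  proof -
    fix a b :: real
    have "(a,b) = a *\<^sub>R (1,0) + b *\<^sub>R (0::real,1::real)" by simp
    hence "G' (a,b) = G' (a *\<^sub>R (1,0) + b *\<^sub>R (0,1))" by metis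
    also have "\<dots> = G' (a *\<^sub>R (1,0)) + G' (b *\<^sub>R (0,1))" by (rule linear_add[OF lin])
    also have "\<dots> = a * G' (1,0) + b * G' (0,1)" by (simp only: linear_scale[OF lin] real_scaleR_def)
    finally show "G' (a,b) = a * G' (1,0) + b * G' (0,1)" .
  qed
  have d1: "((\<lambda>s::real. (s, m)) has_derivative (\<lambda>s. (s, 0))) (at r)"
    by (auto intro!: derivative_eq_intros)
  have "((\<lambda>s. (\<lambda>(r,m). p r m) (s, m)) has_derivative (\<lambda>s. G' (s, 0))) (at r)"
    using has_derivative_compose[OF d1, of "\<lambda>(r,m). p r m" G'] der by simp
  moreover have "(\<lambda>s. G' (s, 0)) = (*) (G' (1,0))"
  proof
    fix s show "G' (s, 0) = G' (1,0) * s" using lin2[of s 0] by simp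
  qed
  ultimately have "((\<lambda>s. p s m) has_real_derivative G' (1,0)) (at r)"
    unfolding has_field_derivative_def by simp
  thus "d_rho p r m = G' (1,0)" unfolding d_rho_def by (rule DERIV_imp_deriv)
  have d2: "((\<lambda>s::real. (r, s)) has_derivative (\<lambda>s. (0, s))) (at m)"
    by (auto intro!: derivative_eq_intros)
  have "((\<lambda>s. (\<lambda>(r,m). p r m) (r, s)) has_derivative (\<lambda>s. G' (0, s))) (at m)"
    using has_derivative_compose[OF d2, of "\<lambda>(r,m). p r m" G'] der by simp
  moreover have "(\<lambda>s. G' (0, s)) = (*) (G' (0,1))"
  proof
    fix s show "G' (0, s) = G' (0,1) * s" using lin2[of 0 s] by simp
  qed
  ultimately have "((\<lambda>s. p r s) has_real_derivative G' (0,1)) (at m)"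
    unfolding has_field_derivative_def by simp
  thus "d_n p r m = G' (0,1)" unfolding d_n_def by (rule DERIV_imp_deriv)
qed


theorem mainTheorem6:
  fixes p zeta tau0 lam :: "real \<Rightarrow> real \<Rightarrow> real"
    and T0 :: real
    and rho nn Bp :: "real \<times> (real^3) \<Rightarrow> real"
    and u :: "real \<times> (real^3) \<Rightarrow> real \<times> (real^3)"
    and rho0 n0 Bp0 :: "real^3 \<Rightarrow> real"
    and u0 :: "real^3 \<Rightarrow> real \<times> (real^3)"
  assumes "A1 p zeta tau0" and "A2 p zeta tau0" and "A3 zeta tau0" and "A4 zeta tau0"
    and "A5 p zeta tau0 lam"
    and "MIS_smooth_admissible_solution p zeta tau0 lam T0 rho nn Bp u"
    and "\<forall>x. rho (0, x) = rho0 x \<and> nn (0, x) = n0 x \<and> Bp (0, x) = Bp0 x \<and> u (0, x) = u0 x"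
    and "\<forall>x. 0 \<le> rho0 x + p (rho0 x) (n0 x) + Bp0 x"
  shows "\<forall>t x. 0 \<le> t \<and> t < T0 \<longrightarrow> 0 \<le> rho (t, x) + p (rho (t, x)) (nn (t, x)) + Bp (t, x)"
proof (intro allI impI)
  fix t0 :: real and x0 :: "real^3" assume tx: "0 \<le> t0 \<and> t0 < T0"
  define S where "S = slab T0"
  define w where "w = (\<lambda>q. rho q + p (rho q) (nn q) + Bp q)"
  show "0 \<le> rho (t0, x0) + p (rho (t0, x0)) (nn (t0, x0)) + Bp (t0, x0)"
  proof (rule ccontr)
    assume "\<not> ?thesis"
    hence w0: "w (t0,x0) < 0" by (simp add: w_def)
    have cR: "Cinf S rho" and cN: "Cinf S nn" and cB: "Cinf S Bp" and cU: "\<forall>b\<in>Basis. Cinf S (\<lambda>q. u q \<bullet> b)"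
      using assms(6) unfolding MIS_smooth_admissible_solution_def Let_def S_def by auto
    have pw: "\<forall>q\<in>S. mink (u q) (u q) = -1 \<and> 0 < fst (u q) \<and> phys p zeta tau0 (rho q) (nn q) (Bp q) \<and>
        dd S rho q (u q) + (rho q + p (rho q) (nn q) + Bp q) * divg S u q = 0 \<and>
        dd S nn q (u q) + nn q * divg S u q = 0 \<and>
        tau0 (rho q) (nn q) * dd S Bp q (u q) + Bp q + lam (rho q) (nn q) * (Bp q)\<^sup>2
           + zeta (rho q) (nn q) * divg S u q = 0"
      using assms(6) unfolding MIS_smooth_admissible_solution_def Let_def S_def by auto
    have cP: "Cinf halfplane (\<lambda>(r, m). p r m)" using assms(1) unfolding A1_def by blast
    have pge: "\<And>r m B. phys p zeta tau0 r m B \<Longrightarrow> - r \<le> p r m" using assms(1) unfolding A1_def by blast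
    obtain cp where cp: "0 < cp" "\<And>r m. 0 < m \<Longrightarrow> cp < tau0 r m" using assms(3) unfolding A3_def by blast
    have A5': "(\<forall>r m. 0 < m \<longrightarrow> lam r m = 0) \<or>
     (Cinf halfplane (\<lambda>(r, m). lam r m) \<and> (\<forall>r m. 0 < m \<longrightarrow> 0 < lam r m) \<and>
      (\<forall>r m Bp. phys p zeta tau0 r m Bp \<longrightarrow> p r m + r < 1 / lam r m))" using assms(5) unfolding A5_def .
    have physq: "phys p zeta tau0 (rho q) (nn q) (Bp q)" if "q \<in> S" for q using pw that by blast
    have nnpos: "nn q > 0" if "q \<in> S" for q using physq[OF that] unfolding phys_def by blast
    have lamq: "0 \<le> lam (rho q) (nn q) \<and> lam (rho q) (nn q) * (rho q + p (rho q) (nn q)) < 1" if "q \<in> S" for q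
    proof -
      have m: "nn q > 0" by (rule nnpos[OF that])
      show ?thesis
      proof (cases "\<forall>r m. 0 < m \<longrightarrow> lam r m = 0")
        case True thus ?thesis using m by simp
      next
        case False
        hence l: "0 < lam (rho q) (nn q)" "p (rho q) (nn q) + rho q < 1 / lam (rho q) (nn q)"
          using A5' m physq[OF that] by blast+
        hence "lam (rho q) (nn q) * (p (rho q) (nn q) + rho q) < 1" by (simp add: less_divide_eq mult.commute)
        thus ?thesis using l by (simp add: add.commute)
      qed
    qed
    have contR: "continuous_on S rho" and contN: "continuous_on S nn" and contB: "continuous_on S Bp"
      using Cinf_D(1) cR cN cB by blast+
    have imgH: "(\<lambda>q. (rho q, nn q)) ` S \<subseteq> halfplane" using nnpos by (auto simp: halfplane_def)
    have compc: "continuous_on S (\<lambda>q. f (rho q) (nn q))" if "continuous_on halfplane (\<lambda>(r,m). f r m)" for f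
      using continuous_on_compose2[OF that continuous_on_Pair[OF contR contN] imgH] by simp
    have contP: "continuous_on S (\<lambda>q. p (rho q) (nn q))" using compc Cinf_D(1)[OF cP] by blast
    have contW: "continuous_on S w" unfolding w_def using contR contP contB by (intro continuous_intros)
    have cUc: "\<And>b. b\<in>Basis \<Longrightarrow> continuous_on S (\<lambda>q. u q \<bullet> b)" using cU Cinf_D(1) by blast
    have cDN: "\<And>b. b\<in>Basis \<Longrightarrow> continuous_on S (\<lambda>q. frechet_derivative nn (at q within S) b)"
      using Cinf_D(3)[OF cN] Cinf_D(1) by blast
    have dN: "nn differentiable_on S" and dR: "rho differentiable_on S" and dB: "Bp differentiable_on S"
      using Cinf_D(2) cR cN cB by blast+
    have derN: "(nn has_derivative frechet_derivative nn (at q within S)) (at q within S)" if "q \<in> S" for q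
      using dN that unfolding differentiable_on_def frechet_derivative_works by blast
    have derR: "(rho has_derivative frechet_derivative rho (at q within S)) (at q within S)" if "q \<in> S" for q
      using dR that unfolding differentiable_on_def frechet_derivative_works by blast
    have derB: "(Bp has_derivative frechet_derivative Bp (at q within S)) (at q within S)" if "q \<in> S" for q
      using dB that unfolding differentiable_on_def frechet_derivative_works by blast
    have contDn: "continuous_on S (\<lambda>q. frechet_derivative nn (at q within S) (u q))"
    proof -
      have "continuous_on S (\<lambda>q. \<Sum>b\<in>Basis. (u q \<bullet> b) * frechet_derivative nn (at q within S) b)"
        using cUc cDN by (intro continuous_on_sum continuous_on_mult) auto
      moreover have "(\<Sum>b\<in>Basis. (u q \<bullet> b) * frechet_derivative nn (at q within S) b)
          = frechet_derivative nn (at q within S) (u q)" if "q \<in> S" for q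
        using lin_expand[OF has_derivative_linear[OF derN[OF that]], of "u q"] by simp
      ultimately show ?thesis by (rule continuous_on_eq)
    qed
    define dv where "dv = (\<lambda>q. - frechet_derivative nn (at q within S) (u q) / nn q)"
    have nn0: "\<forall>q\<in>S. nn q \<noteq> 0" using nnpos by (metis less_irrefl)
    have contDv: "continuous_on S dv" unfolding dv_def
      using contDn contN nn0 by (intro continuous_intros) auto
    have dvq: "divg S u q = dv q" if "q \<in> S" for q
    proof -
      have "frechet_derivative nn (at q within S) (u q) + nn q * divg S u q = 0"
        using pw that unfolding dd_def by blast
      thus ?thesis unfolding dv_def using nnpos[OF that] by (simp add: field_simps)
    qed
    define K where "K = ({0..t0} \<times> cball x0 t0) \<inter> {q. norm (snd q - x0) + fst q \<le> t0}"
    have cK: "compact K" unfolding K_def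
      by (intro compact_Int_closed compact_Times compact_Icc compact_cball closed_Collect_le continuous_intros)
    have KS: "K \<subseteq> S" using tx by (auto simp: K_def S_def slab_def)
    have Kmem: "q \<in> K \<longleftrightarrow> 0 \<le> fst q \<and> norm (snd q - x0) + fst q \<le> t0" for q
    proof -
      have "norm (snd q - x0) + fst q \<le> t0 \<Longrightarrow> 0 \<le> fst q \<Longrightarrow> dist x0 (snd q) \<le> t0"
        by (simp add: dist_norm norm_minus_commute)
      moreover have "norm (snd q - x0) + fst q \<le> t0 \<Longrightarrow> fst q \<le> t0"
        using norm_ge_zero[of "snd q - x0"] by linarith
      ultimately show ?thesis unfolding K_def
        by (cases q) (auto simp: mem_Times_iff)
    qed
    obtain D where D: "\<And>q. q \<in> K \<Longrightarrow> \<bar>dv q\<bar> \<le> D"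
    proof -
      have "compact (dv ` K)" using continuous_on_subset[OF contDv KS] cK by (rule compact_continuous_image)
      then obtain a where "\<forall>x\<in>dv ` K. norm x \<le> a" using compact_imp_bounded bounded_iff by metis
      thus ?thesis using that by auto
    qed
    obtain Lm where Lm: "\<And>q. q \<in> K \<Longrightarrow> lam (rho q) (nn q) \<le> Lm"
    proof (cases "\<forall>r m. 0 < m \<longrightarrow> lam r m = 0")
      case True
      have "lam (rho q) (nn q) \<le> 0" if "q \<in> K" for q
        using True nnpos[of q] KS that by auto
      thus ?thesis using that[of 0] by blast
    next
      case False
      hence "Cinf halfplane (\<lambda>(r, m). lam r m)" using A5' by blast
      hence "continuous_on S (\<lambda>q. lam (rho q) (nn q))" using compc Cinf_D(1) by blast
      hence "compact ((\<lambda>q. lam (rho q) (nn q)) ` K)" using cK continuous_on_subset KS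
        by (metis compact_continuous_image)
      then obtain a where a: "\<forall>x\<in>(\<lambda>q. lam (rho q) (nn q)) ` K. norm x \<le> a" using compact_imp_bounded bounded_iff by metis
      have "lam (rho q) (nn q) \<le> a" if "q \<in> K" for q
      proof -
        have "norm (lam (rho q) (nn q)) \<le> a" using a that by blast
        thus ?thesis by simp
      qed
      thus ?thesis using that by blast
    qed
    define M where "M = 2*D + 1/cp + 1"
    define E where "E = exp (M * t0)"
    have E0: "E > 0" by (simp add: E_def)
    define \<epsilon> where "\<epsilon> = min (- w (t0,x0) / (2*E)) (cp / (2*E*(\<bar>Lm\<bar>+1)))"
    have eps0: "\<epsilon> > 0" unfolding \<epsilon>_def using w0 E0 cp(1) by (simp add: add_pos_nonneg divide_neg_pos)
    have epsE1: "\<epsilon> * E \<le> - w (t0,x0) / 2"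
    proof -
      have "\<epsilon> \<le> - w (t0,x0) / (2*E)" unfolding \<epsilon>_def by simp
      hence "\<epsilon> * E \<le> (- w (t0,x0) / (2*E)) * E" by (rule mult_right_mono) (use E0 in simp)
      also have "(- w (t0,x0) / (2*E)) * E = - w (t0,x0) / 2" using E0 by simp
      finally show ?thesis .
    qed
    have epsE2: "\<epsilon> * E * (\<bar>Lm\<bar>+1) \<le> cp / 2"
    proof -
      have "\<epsilon> \<le> cp / (2*E*(\<bar>Lm\<bar>+1))" unfolding \<epsilon>_def by simp
      hence "\<epsilon> * (E * (\<bar>Lm\<bar>+1)) \<le> (cp / (2*E*(\<bar>Lm\<bar>+1))) * (E * (\<bar>Lm\<bar>+1))" using E0
        by (intro mult_right_mono) auto
      moreover have "(cp / (2*E*(\<bar>Lm\<bar>+1))) * (E * (\<bar>Lm\<bar>+1)) = cp / 2"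
      proof -
        define Y where "Y = E * (\<bar>Lm\<bar>+1)"
        have Y0: "Y > 0" unfolding Y_def using E0 by (simp add: add_nonneg_pos)
        have "2*E*(\<bar>Lm\<bar>+1) = 2*Y" unfolding Y_def by simp
        hence "(cp / (2*E*(\<bar>Lm\<bar>+1))) * (E * (\<bar>Lm\<bar>+1)) = (cp / (2*Y)) * Y" unfolding Y_def by simp
        also have "\<dots> = cp / 2" using Y0 by simp
        finally show ?thesis .
      qed
      ultimately have "\<epsilon> * (E * (\<bar>Lm\<bar>+1)) \<le> cp / 2" by linarith
      thus ?thesis by (simp only: mult.assoc)
    qed
    define h where "h = (\<lambda>q. w q + \<epsilon> * exp (M * fst q))"
    have contH: "continuous_on K h" unfolding h_def
      using continuous_on_subset[OF contW KS] by (intro continuous_intros)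
    have q0K: "(t0,x0) \<in> K" using tx by (simp add: Kmem)
    have hq0: "h (t0,x0) \<le> 0" unfolding h_def using epsE1 w0 by (simp add: E_def)
    have init: "h q > 0" if "q \<in> K" "fst q \<le> 0" for q
    proof -
      obtain t x where q: "q = (t,x)" by (cases q)
      have t: "t = 0" using that q by (simp add: Kmem)
      have "w q \<ge> 0" using assms(7,8) unfolding w_def q t by simp
      thus ?thesis unfolding h_def using q t eps0 by simp
    qed
    have uq: "fst (u q) \<ge> 1 \<and> norm (snd (u q)) \<le> fst (u q)" if "q \<in> S" for q
    proof -
      have m: "- fst (u q) * fst (u q) + snd (u q) \<bullet> snd (u q) = -1" and pos: "0 < fst (u q)"
        using pw that unfolding mink_def by blast+
      have "norm (snd (u q)) ^ 2 = snd (u q) \<bullet> snd (u q)" by (rule power2_norm_eq_inner)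
      hence n2: "norm (snd (u q)) ^ 2 = fst (u q) ^ 2 - 1" using m by (simp add: power2_eq_square)
      have "fst (u q) ^ 2 \<ge> 1" using n2 zero_le_power2[of "norm (snd (u q))"] by linarith
      hence sq: "fst (u q) * fst (u q) \<ge> 1" by (simp add: power2_eq_square)
      have g1: "fst (u q) \<ge> 1"
      proof (rule ccontr)
        assume "\<not> 1 \<le> fst (u q)" hence "fst (u q) < 1" by simp
        hence "fst (u q) * fst (u q) < 1 * 1" using pos by (intro mult_strict_mono) auto
        with sq show False by simp
      qed
      have "norm (snd (u q)) ^ 2 \<le> fst (u q) ^ 2" using n2 by simp
      hence "norm (snd (u q)) \<le> fst (u q)" using pos by (simp add: power2_le_iff_abs_le)
      thus ?thesis using g1 by simp
    qed
    have inward: "\<exists>\<delta>>0. \<forall>s. 0 \<le> s \<and> s \<le> \<delta> \<longrightarrow>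
        q - s *\<^sub>R u q \<in> K \<and> (0 < s \<longrightarrow> fst (q - s *\<^sub>R u q) < fst q)" if qK: "q \<in> K" and tq: "fst q > 0" for q
    proof -
      have U: "fst (u q) \<ge> 1" "norm (snd (u q)) \<le> fst (u q)" using uq[OF subsetD[OF KS qK]] by auto
      define \<delta> where "\<delta> = fst q / fst (u q)"
      have d0: "\<delta> > 0" using tq U by (simp add: \<delta>_def)
      have "q - s *\<^sub>R u q \<in> K \<and> (0 < s \<longrightarrow> fst (q - s *\<^sub>R u q) < fst q)" if s: "0 \<le> s" "s \<le> \<delta>" for s
      proof -
        have "s * fst (u q) \<le> fst q" using s U unfolding \<delta>_def by (simp add: le_divide_eq)
        hence f1: "0 \<le> fst q - s * fst (u q)" by simp
        have ee: "snd q - s *\<^sub>R snd (u q) - x0 = (snd q - x0) - s *\<^sub>R snd (u q)" by (simp add: algebra_simps)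
        have "norm ((snd q - x0) - s *\<^sub>R snd (u q)) \<le> norm (snd q - x0) + norm (s *\<^sub>R snd (u q))"
          by (rule norm_triangle_ineq4)
        hence "norm (snd q - s *\<^sub>R snd (u q) - x0) \<le> norm (snd q - x0) + norm (s *\<^sub>R snd (u q))"
          by (subst ee)
        also have "norm (s *\<^sub>R snd (u q)) \<le> s * fst (u q)" using s U by (simp add: mult_left_mono)
        finally have "norm (snd q - s *\<^sub>R snd (u q) - x0) + (fst q - s * fst (u q)) \<le> t0"
          using qK by (simp add: Kmem) 
        hence "q - s *\<^sub>R u q \<in> K" using f1 by (simp add: Kmem)
        moreover have "0 < s \<longrightarrow> fst (q - s *\<^sub>R u q) < fst q" using U by simp
        ultimately show ?thesis by blast
      qed
      thus ?thesis using d0 by blast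
    qed
    have ctt: "continuous_on K fst" by (intro continuous_intros)
    obtain q \<delta> where qK: "q \<in> K" and tq: "fst q > 0" and hq: "h q = 0" and d0: "\<delta> > 0"
      and seg: "\<And>s. 0 \<le> s \<and> s \<le> \<delta> \<Longrightarrow> q - s *\<^sub>R u q \<in> K"
      and hpos: "\<And>s. 0 < s \<and> s \<le> \<delta> \<Longrightarrow> h (q - s *\<^sub>R u q) > h q"
      using MP[OF cK contH ctt q0K hq0 init inward] by blast
    have qS: "q \<in> S" using qK KS by blast
    define R' where "R' = frechet_derivative rho (at q within S)"
    define N' where "N' = frechet_derivative nn (at q within S)"
    define B' where "B' = frechet_derivative Bp (at q within S)"
    define G where "G = (\<lambda>(r::real, m::real). p r m)"
    define G' where "G' = frechet_derivative G (at (rho q, nn q))"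
    have Hq: "(rho q, nn q) \<in> halfplane" using nnpos[OF qS] by (simp add: halfplane_def)
    have openH: "open halfplane"
    proof -
      have "halfplane = {x::real\<times>real. 0 < snd x}" by (auto simp: halfplane_def)
      moreover have "open {x::real\<times>real. 0 < snd x}" by (intro open_Collect_less continuous_intros)
      ultimately show ?thesis by simp
    qed
    have "G differentiable (at (rho q, nn q) within halfplane)"
      using Cinf_D(2)[OF cP] Hq unfolding differentiable_on_def G_def by blast
    hence "G differentiable (at (rho q, nn q))" using at_within_open[OF Hq openH] by simp
    hence derG: "(G has_derivative G') (at (rho q, nn q))" unfolding G'_def frechet_derivative_works .
    have derGp: "((\<lambda>(r,m). p r m) has_derivative G') (at (rho q, nn q))" using derG unfolding G_def .
    have derP: "((\<lambda>y. p (rho y) (nn y)) has_derivative (\<lambda>z. G' (R' z, N' z))) (at q within S)"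
    proof -
      have "((\<lambda>y. (rho y, nn y)) has_derivative (\<lambda>z. (R' z, N' z))) (at q within S)"
        unfolding R'_def N'_def using derR[OF qS] derN[OF qS] by (rule has_derivative_Pair)
      from has_derivative_compose[OF this derG] show ?thesis by (simp add: G_def)
    qed
    have derE: "((\<lambda>y. \<epsilon> * exp (M * fst y)) has_derivative (\<lambda>z. \<epsilon> * (exp (M * fst q) * (M * fst z)))) (at q within S)"
      by (auto intro!: derivative_eq_intros)
    define F' where "F' = (\<lambda>z. R' z + G' (R' z, N' z) + B' z + \<epsilon> * (exp (M * fst q) * (M * fst z)))"
    have derH: "(h has_derivative F') (at q within S)"
      unfolding h_def w_def F'_def
      using derR[OF qS] derP derB[OF qS] derE unfolding R'_def B'_def
      by (intro has_derivative_add) auto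
    have Fle: "F' (u q) \<le> 0"
      using DL[OF derH d0, of "u q"] seg hpos KS by auto
    define b where "b = \<epsilon> * exp (M * fst q)"
    have b0: "b > 0" using eps0 by (simp add: b_def)
    have wb: "w q = - b" using hq unfolding h_def b_def by simp
    have tqle: "fst q \<le> t0" using qK norm_ge_zero[of "snd q - x0"] unfolding Kmem by linarith
    have bE: "b \<le> \<epsilon> * E"
    proof -
      have M0: "M \<ge> 0" 
      proof -
        have "D \<ge> 0" using D[OF qK] abs_ge_zero order_trans by blast
        moreover have "1/cp > 0" using cp(1) by simp
        ultimately show ?thesis unfolding M_def by linarith
      qed
      have "exp (M * fst q) \<le> exp (M * t0)" using M0 tqle by (simp add: mult_left_mono)
      thus ?thesis unfolding b_def E_def using eps0 by simp
    qed
    have Lb: "Lm * b < cp"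
    proof -
      have "Lm * b \<le> \<bar>Lm\<bar> * b" using b0 by (simp add: mult_right_mono)
      also have "\<dots> \<le> \<bar>Lm\<bar> * (\<epsilon> * E)" using bE by (simp add: mult_left_mono)
      also have "\<dots> < (\<bar>Lm\<bar>+1) * (\<epsilon> * E)" using eps0 E0 by simp
      also have "\<dots> \<le> cp/2" using epsE2 by (simp add: algebra_simps)
      finally show ?thesis using cp(1) by simp
    qed
    have ph: "phys p zeta tau0 (rho q) (nn q) (Bp q)" by (rule physq[OF qS])
    have eqs: "dd S rho q (u q) + (rho q + p (rho q) (nn q) + Bp q) * divg S u q = 0"
        "dd S nn q (u q) + nn q * divg S u q = 0"
        "tau0 (rho q) (nn q) * dd S Bp q (u q) + Bp q + lam (rho q) (nn q) * (Bp q)\<^sup>2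
           + zeta (rho q) (nn q) * divg S u q = 0" using pw qS by blast+
    have alg: "R' (u q) + (R' (u q) * d_rho p (rho q) (nn q) + N' (u q) * d_n p (rho q) (nn q)) + B' (u q)
        + M * b * fst (u q) > 0"
    proof (rule ALG[where w = "w q" and dv = "divg S u q" and m = "nn q" and B = "Bp q"
          and lam = "lam (rho q) (nn q)" and zeta = "zeta (rho q) (nn q)" and tau = "tau0 (rho q) (nn q)"
          and c = "cs2 p zeta tau0 (rho q) (nn q) (Bp q)" and a = "rho q + p (rho q) (nn q)"
          and Dm = D and Lm = Lm and cp = cp])
      show "R' (u q) + w q * divg S u q = 0" using eqs(1) unfolding R'_def dd_def w_def .
      show "N' (u q) + nn q * divg S u q = 0" using eqs(2) unfolding N'_def dd_def .
      show "tau0 (rho q) (nn q) * B' (u q) + Bp q + lam (rho q) (nn q) * (Bp q)\<^sup>2 + zeta (rho q) (nn q) * divg S u q = 0"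
        using eqs(3) unfolding B'_def dd_def .
      show "cs2 p zeta tau0 (rho q) (nn q) (Bp q) = zeta (rho q) (nn q) / (tau0 (rho q) (nn q) * w q) +
          d_rho p (rho q) (nn q) + nn q * d_n p (rho q) (nn q) / w q"
        unfolding cs2_def w_def ..
      show "0 < cs2 p zeta tau0 (rho q) (nn q) (Bp q)" "cs2 p zeta tau0 (rho q) (nn q) (Bp q) < 1"
        using ph unfolding phys_def by blast+
      show "w q = - b" by (rule wb)
      show "0 < b" by (rule b0)
      show "Bp q = w q - (rho q + p (rho q) (nn q))" unfolding w_def by simp
      show "0 \<le> rho q + p (rho q) (nn q)" using pge[OF ph] by simp
      show "0 \<le> lam (rho q) (nn q)" "lam (rho q) (nn q) * (rho q + p (rho q) (nn q)) < 1" using lamq[OF qS] by blast+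
      show "lam (rho q) (nn q) \<le> Lm" by (rule Lm[OF qK])
      show "cp < tau0 (rho q) (nn q)" using cp(2) nnpos[OF qS] by blast
      show "0 < cp" by (rule cp(1))
      show "\<bar>divg S u q\<bar> \<le> D" using D[OF qK] dvq[OF qS] by simp
      show "M = 2 * D + 1 / cp + 1" by (rule M_def)
      show "Lm * b < cp" by (rule Lb)
      show "1 \<le> fst (u q)" using uq[OF qS] by blast
    qed
    have "F' (u q) = R' (u q) + (R' (u q) * d_rho p (rho q) (nn q) + N' (u q) * d_n p (rho q) (nn q)) + B' (u q)
        + M * b * fst (u q)"
      unfolding F'_def b_def partials(1,2)[OF derGp] partials(3)[OF derGp, of "R' (u q)" "N' (u q)"]
      by (simp add: algebra_simps)
    with alg Fle show False by linarith
  qed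
qed

end
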